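(* Let $\varepsilon>0$. Then $\mathfrak{ss}_e^\varepsilon=\mathfrak{ss}_l^{(-\varepsilon,\varepsilon)}$ and $(\mathfrak{ss}_e^{\varepsilon})^\perp=(\mathfrak{ss}_l^{(-\varepsilon,\varepsilon)})^\perp$.
   Context: Let $\mathfrak S_{cc}$ be the set of all sequences $\mathbf a=\langle a_i:i\in\omega\rangle$ of rational numbers with $a_i\to0$ such that $\sum_i a_i$ is conditionally convergent (converges to a real number, with the positive terms summing to $+\infty$ and the negative terms to $-\infty$). Let $[\omega]^\omega_\omega$ be the set of infinite coinfinite subsets of $\omega$; for such $X$ with increasing enumeration $\langle i_n\rangle$, $\sum_X\mathbf a$ denotes $\sum_n a_{i_n}$. For $A\subseteq\mathbb R$: $\mathfrak{ss}_l^A$ is the least cardinality of $\mathcal X\subseteq[\omega]^\omega_\omega$ such that every $\mathbf a\in\mathfrak S_{cc}$ has some $X\in\mathcal X$ for which $\sum_X\mathbf a$ converges to a limit in $A$; $(\mathfrak{ss}_l^A)^\perp$ is the least cardinality of $\mathcal A\subseteq\mathfrak S_{cc}$ such that no $X\in[\omega]^\omega_\omega$ has $\sum_X\mathbf a$ converging to a limit in $A$ for all $\mathbf a\in\mathcal A$. For $\varepsilon>0$, $\mathfrak{ss}_e^\varepsilon$ is the least cardinality of $\mathcal X\subseteq[\omega]^\omega_\omega$ such that every $\mathbf a\in\mathfrak S_{cc}$ has some $X\in\mathcal X$ for which $\sum_X\mathbf a$ converges to a limit in the open interval $(\sum\mathbf a-\varepsilon,\sum\mathbf a+\varepsilon)$;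 $(\mathfrak{ss}_e^{\varepsilon})^\perp$ is the least cardinality of $\mathcal A\subseteq\mathfrak S_{cc}$ such that no $X\in[\omega]^\omega_\omega$ has this property for all $\mathbf a\in\mathcal A$ simultaneously. *)

theory Defs
  imports "HOL-Analysis.Analysis" "HOL-Library.Infinite_Set"
begin

definition inf_coinf :: "nat set set" where
  "inf_coinf = {X. infinite X \<and> infinite (UNIV - X)}"

definition S_cc :: "(nat \<Rightarrow> rat) set" where
  "S_cc = {a. (\<lambda>i. real_of_rat (a i)) \<longlonglongrightarrow> 0
            \<and> summable (\<lambda>i. real_of_rat (a i))
            \<and> filterlim (\<lambda>n. \<Sum>i<n. max 0 (real_of_rat (a i))) at_top sequentially
            \<and> filterlim (\<lambda>n. \<Sum>i<n. min 0 (real_of_rat (a i))) at_bot sequentially}"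

definition sub_sums_in :: "(nat \<Rightarrow> rat) \<Rightarrow> nat set \<Rightarrow> real set \<Rightarrow> bool" where
  "sub_sums_in a X A \<longleftrightarrow> (\<exists>L\<in>A. (\<lambda>n. real_of_rat (a (enumerate X n))) sums L)"

definition eint :: "real \<Rightarrow> (nat \<Rightarrow> rat) \<Rightarrow> real set" where
  "eint \<epsilon> a = {(\<Sum>i. real_of_rat (a i)) - \<epsilon> <..< (\<Sum>i. real_of_rat (a i)) + \<epsilon>}"

definition mincard :: "('a set \<Rightarrow> bool) \<Rightarrow> 'a rel" where
  "mincard P = card_of (SOME F. P F \<and> (\<forall>G. P G \<longrightarrow> (card_of F, card_of G) \<in> ordLeq))"

definition ss_l_fam :: "real set \<Rightarrow> nat set set \<Rightarrow> bool" where
  "ss_l_fam A \<X> \<longleftrightarrow> \<X> \<subseteq> inf_coinf \<and> (\<forall>a\<in>S_cc. \<exists>X\<in>\<X>. sub_sums_in a X A)"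

definition ss_l_perp_fam :: "real set \<Rightarrow> (nat \<Rightarrow> rat) set \<Rightarrow> bool" where
  "ss_l_perp_fam A \<A> \<longleftrightarrow> \<A> \<subseteq> S_cc \<and> \<not> (\<exists>X\<in>inf_coinf. \<forall>a\<in>\<A>. sub_sums_in a X A)"

definition ss_e_fam :: "real \<Rightarrow> nat set set \<Rightarrow> bool" where
  "ss_e_fam \<epsilon> \<X> \<longleftrightarrow> \<X> \<subseteq> inf_coinf \<and> (\<forall>a\<in>S_cc. \<exists>X\<in>\<X>. sub_sums_in a X (eint \<epsilon> a))"

definition ss_e_perp_fam :: "real \<Rightarrow> (nat \<Rightarrow> rat) set \<Rightarrow> bool" where
  "ss_e_perp_fam \<epsilon> \<A> \<longleftrightarrow> \<A> \<subseteq> S_cc \<and> \<not> (\<exists>X\<in>inf_coinf. \<forall>a\<in>\<A>. sub_sums_in a X (eint \<epsilon> a))"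

definition ss_l :: "real set \<Rightarrow> nat set rel" where
  "ss_l A = mincard (ss_l_fam A)"
definition ss_l_perp :: "real set \<Rightarrow> (nat \<Rightarrow> rat) rel" where
  "ss_l_perp A = mincard (ss_l_perp_fam A)"
definition ss_e :: "real \<Rightarrow> nat set rel" where
  "ss_e \<epsilon> = mincard (ss_e_fam \<epsilon>)"
definition ss_e_perp :: "real \<Rightarrow> (nat \<Rightarrow> rat) rel" where
  "ss_e_perp \<epsilon> = mincard (ss_e_perp_fam \<epsilon>)"

end

theory Submission
  imports Defs
begin

lemma exists_min_card:
  assumes "P (F::'a set)"
  shows "\<exists>F. P F \<and> (\<forall>G. P G \<longrightarrow> ( (card_of (F)), (card_of (G)) ) \<in> ordLeq)"
proof -
  have "(card_of (F)) \<in> {card_of G | G. P G}" using assms by blast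
  then obtain r where r: "r \<in> {card_of G | G. P G}"
    and mn: "\<And>y. (y, r) \<in> ordLess \<Longrightarrow> y \<notin> {card_of G | G. P G}"
    by (rule wfE_min[OF wf_ordLess]) blast
  then obtain F0 where F0: "P F0" "r = (card_of (F0))" by blast
  have "\<forall>G. P G \<longrightarrow> ( (card_of (F0)), (card_of (G)) ) \<in> ordLeq"
  proof (intro allI impI)
    fix G assume "P G"
    then have "\<not> ( (card_of (G)), (card_of (F0)) ) \<in> ordLess" using mn F0 by blast
    then show "( (card_of (F0)), (card_of (G)) ) \<in> ordLeq"
      using not_ordLess_iff_ordLeq card_of_Well_order by blast
  qed
  then show ?thesis using F0 by blast
qed

lemma mincard_spec:
  assumes "P F"
  shows "\<exists>F0. mincard P = (card_of (F0)) \<and> P F0 \<and> (\<forall>G. P G \<longrightarrow> ( (card_of (F0)), (card_of (G)) ) \<in> ordLeq)"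
  unfolding mincard_def using someI_ex[OF exists_min_card[of P, OF assms]] by blast

lemma mincard_iso:
  fixes h :: "'a \<Rightarrow> 'a"
  assumes PQ: "\<And>F. P F \<Longrightarrow> Q (h ` F)" and QP: "\<And>F. Q F \<Longrightarrow> P (h ` F)" and inj: "inj h"
  shows "(mincard P, mincard Q) \<in> ordIso"
proof (cases "\<exists>F. P F")
  case True
  then obtain F where "P F" by blast
  then have "Q (h ` F)" using PQ by blast
  obtain F0 where F0: "mincard P = (card_of (F0))" "P F0" "\<forall>G. P G \<longrightarrow> ( (card_of (F0)), (card_of (G)) ) \<in> ordLeq"
    using mincard_spec[of P F, OF \<open>P F\<close>] by blast
  obtain G0 where G0: "mincard Q = (card_of (G0))" "Q G0" "\<forall>G. Q G \<longrightarrow> ( (card_of (G0)), (card_of (G)) ) \<in> ordLeq"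
    using mincard_spec[of Q "h ` F", OF \<open>Q (h ` F)\<close>] by blast
  have iso: "( (card_of (h ` A)), (card_of (A)) ) \<in> ordIso" for A
  proof -
    have "bij_betw h A (h ` A)" using inj by (simp add: bij_betw_imageI inj_on_subset)
    then have "( (card_of (A)), (card_of (h ` A)) ) \<in> ordIso" using card_of_ordIso by blast
    then show ?thesis using ordIso_symmetric by blast
  qed
  have 1: "( (card_of (G0)), (card_of (F0)) ) \<in> ordLeq"
    using G0(3) PQ[OF F0(2)] iso[of F0] ordLeq_ordIso_trans by blast
  have 2: "( (card_of (F0)), (card_of (G0)) ) \<in> ordLeq"
    using F0(3) QP[OF G0(2)] iso[of G0] ordLeq_ordIso_trans by blast
  show ?thesis unfolding F0(1) G0(1) ordIso_iff_ordLeq using 1 2 by blast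
next
  case False
  then have "\<not> Q F" for F using QP by blast
  then have "(\<lambda>F. P F \<and> (\<forall>G. P G \<longrightarrow> ( (card_of (F)), (card_of (G)) ) \<in> ordLeq))
           = (\<lambda>F. Q F \<and> (\<forall>G. Q G \<longrightarrow> ( (card_of (F)), (card_of (G)) ) \<in> ordLeq))" using False by auto
  then have "mincard P = mincard Q" unfolding mincard_def by simp
  then show ?thesis unfolding mincard_def by (simp only:) (rule ordIso_refl[OF card_of_Card_order])
qed

lemma sums_enum:
  fixes f :: "nat \<Rightarrow> real"
  assumes "infinite X"
  shows "(\<lambda>n. f (enumerate X n)) sums L \<longleftrightarrow> (\<lambda>i. if i \<in> X then f i else 0) sums L"
proof -
  have sm: "strict_mono (enumerate X)" using assms by (simp add: strict_mono_enumerate)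
  have r: "range (enumerate X) = X" using assms by (simp add: range_enumerate)
  have "(\<lambda>n. (\<lambda>i. if i \<in> X then f i else 0) (enumerate X n)) sums L
        \<longleftrightarrow> (\<lambda>i. if i \<in> X then f i else 0) sums L"
    by (rule sums_mono_reindex[OF sm]) (use r in auto)
  moreover have "(\<lambda>n. (\<lambda>i. if i \<in> X then f i else 0) (enumerate X n)) = (\<lambda>n. f (enumerate X n))"
    using enumerate_in_set[OF assms] by auto
  ultimately show ?thesis by simp
qed

lemma compl_equiv:
  assumes a: "a \<in> S_cc" and X: "X \<in> inf_coinf"
  shows "sub_sums_in a X (eint \<epsilon> a) \<longleftrightarrow> sub_sums_in a (UNIV - X) {-\<epsilon><..<\<epsilon>}"
proof -
  define f where "f = (\<lambda>i. real_of_rat (a i))"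
  have sf: "summable f" using a unfolding S_cc_def f_def by blast
  define S where "S = suminf f"
  have fS: "f sums S" using sf S_def by (simp add: summable_sums)
  have iX: "infinite X" and iC: "infinite (UNIV - X)" using X unfolding inf_coinf_def by auto
  have split: "(\<lambda>i. if i \<in> UNIV - X then f i else 0) = (\<lambda>i. f i - (if i \<in> X then f i else 0))"
    by auto
  have eq: "(\<lambda>n. f (enumerate X n)) sums L \<longleftrightarrow> (\<lambda>n. f (enumerate (UNIV - X) n)) sums (S - L)" for L
  proof -
    have "(\<lambda>n. f (enumerate X n)) sums L \<longleftrightarrow> (\<lambda>i. if i \<in> X then f i else 0) sums L"
      using sums_enum[OF iX] .
    also have "\<dots> \<longleftrightarrow> (\<lambda>i. if i \<in> UNIV - X then f i else 0) sums (S - L)"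
    proof
      assume "(\<lambda>i. if i \<in> X then f i else 0) sums L"
      then show "(\<lambda>i. if i \<in> UNIV - X then f i else 0) sums (S - L)"
        unfolding split using sums_diff[OF fS] by blast
    next
      assume h: "(\<lambda>i. if i \<in> UNIV - X then f i else 0) sums (S - L)"
      have "(\<lambda>i. f i - (if i \<in> UNIV - X then f i else 0)) sums (S - (S - L))"
        using sums_diff[OF fS h] .
      moreover have "(\<lambda>i. f i - (if i \<in> UNIV - X then f i else 0)) = (\<lambda>i. if i \<in> X then f i else 0)"
        by auto
      ultimately show "(\<lambda>i. if i \<in> X then f i else 0) sums L" by simp
    qed
    also have "\<dots> \<longleftrightarrow> (\<lambda>n. f (enumerate (UNIV - X) n)) sums (S - L)"
      using sums_enum[OF iC] by simp
    finally show ?thesis .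
  qed
  have ei: "eint \<epsilon> a = {S - \<epsilon> <..< S + \<epsilon>}" unfolding eint_def S_def f_def by simp
  show ?thesis
  proof
    assume "sub_sums_in a X (eint \<epsilon> a)"
    then obtain L where L: "L \<in> eint \<epsilon> a" "(\<lambda>n. f (enumerate X n)) sums L"
      unfolding sub_sums_in_def f_def by blast
    have s: "(\<lambda>n. f (enumerate (UNIV - X) n)) sums (S - L)" using eq L(2) by blast
    have m: "S - L \<in> {-\<epsilon><..<\<epsilon>}" using L(1) unfolding ei by auto
    show "sub_sums_in a (UNIV - X) {-\<epsilon><..<\<epsilon>}"
      unfolding sub_sums_in_def using s m unfolding f_def by blast
  next
    assume "sub_sums_in a (UNIV - X) {-\<epsilon><..<\<epsilon>}"
    then obtain M where M: "M \<in> {-\<epsilon><..<\<epsilon>}" "(\<lambda>n. f (enumerate (UNIV - X) n)) sums M"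
      unfolding sub_sums_in_def f_def by blast
    have "(\<lambda>n. f (enumerate (UNIV - X) n)) sums (S - (S - M))" using M(2) by simp
    then have s: "(\<lambda>n. f (enumerate X n)) sums (S - M)" using eq[of "S - M"] by blast
    have m: "S - M \<in> eint \<epsilon> a" using M(1) unfolding ei by auto
    show "sub_sums_in a X (eint \<epsilon> a)"
      unfolding sub_sums_in_def using s m unfolding f_def by blast
  qed
qed

lemma compl_inf_coinf: "X \<in> inf_coinf \<Longrightarrow> UNIV - X \<in> inf_coinf"
  unfolding inf_coinf_def by (simp add: Diff_Diff_Int)

lemma dd: "UNIV - (UNIV - (Y::nat set)) = Y" by blast

lemma e_to_l:
  assumes "a \<in> S_cc" "X \<in> inf_coinf" "sub_sums_in a X (eint \<epsilon> a)"
  shows "sub_sums_in a (UNIV - X) {-\<epsilon><..<\<epsilon>}"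
  by (rule iffD1[OF compl_equiv[OF assms(1,2)] assms(3)])

lemma l_to_e:
  assumes "a \<in> S_cc" "Y \<in> inf_coinf" "sub_sums_in a Y {-\<epsilon><..<\<epsilon>}"
  shows "sub_sums_in a (UNIV - Y) (eint \<epsilon> a)"
proof -
  have c: "UNIV - Y \<in> inf_coinf" by (rule compl_inf_coinf[OF assms(2)])
  have "sub_sums_in a (UNIV - (UNIV - Y)) {-\<epsilon><..<\<epsilon>}" unfolding dd by (rule assms(3))
  then show ?thesis by (rule iffD2[OF compl_equiv[OF assms(1) c]])
qed

lemma fam_PQ:
  assumes E: "ss_e_fam \<epsilon> F"
  shows "ss_l_fam {-\<epsilon><..<\<epsilon>} ((\<lambda>X. UNIV - X) ` F)"
  unfolding ss_l_fam_def
proof (intro conjI ballI)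
  have sub: "F \<subseteq> inf_coinf" using E unfolding ss_e_fam_def by simp
  show "(\<lambda>X. UNIV - X) ` F \<subseteq> inf_coinf"
  proof
    fix Z assume "Z \<in> (\<lambda>X. UNIV - X) ` F"
    then obtain X where "X \<in> F" "Z = UNIV - X" by (rule imageE)
    then show "Z \<in> inf_coinf" using sub compl_inf_coinf by auto
  qed
  fix a assume a: "a \<in> S_cc"
  then obtain X where X: "X \<in> F" "sub_sums_in a X (eint \<epsilon> a)"
    using E unfolding ss_e_fam_def by auto
  have "sub_sums_in a (UNIV - X) {-\<epsilon><..<\<epsilon>}"
    by (rule e_to_l[OF a _ X(2)]) (use sub X(1) in auto)
  moreover have "UNIV - X \<in> (\<lambda>X. UNIV - X) ` F" using X(1) by (rule imageI)
  ultimately show "\<exists>Y\<in>(\<lambda>X. UNIV - X) ` F. sub_sums_in a Y {-\<epsilon><..<\<epsilon>}" by (rule bexI)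
qed

lemma fam_QP:
  assumes L: "ss_l_fam {-\<epsilon><..<\<epsilon>} F"
  shows "ss_e_fam \<epsilon> ((\<lambda>X. UNIV - X) ` F)"
  unfolding ss_e_fam_def
proof (intro conjI ballI)
  have sub: "F \<subseteq> inf_coinf" using L unfolding ss_l_fam_def by simp
  show "(\<lambda>X. UNIV - X) ` F \<subseteq> inf_coinf"
  proof
    fix Z assume "Z \<in> (\<lambda>X. UNIV - X) ` F"
    then obtain X where "X \<in> F" "Z = UNIV - X" by (rule imageE)
    then show "Z \<in> inf_coinf" using sub compl_inf_coinf by auto
  qed
  fix a assume a: "a \<in> S_cc"
  then obtain X where X: "X \<in> F" "sub_sums_in a X {-\<epsilon><..<\<epsilon>}"
    using L unfolding ss_l_fam_def by auto
  have "sub_sums_in a (UNIV - X) (eint \<epsilon> a)"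
    by (rule l_to_e[OF a _ X(2)]) (use sub X(1) in auto)
  moreover have "UNIV - X \<in> (\<lambda>X. UNIV - X) ` F" using X(1) by (rule imageI)
  ultimately show "\<exists>Y\<in>(\<lambda>X. UNIV - X) ` F. sub_sums_in a Y (eint \<epsilon> a)" by (rule bexI)
qed

lemma perp_eq: "ss_e_perp_fam \<epsilon> = ss_l_perp_fam {-\<epsilon><..<\<epsilon>}"
proof (rule ext)
  fix A
  show "ss_e_perp_fam \<epsilon> A = ss_l_perp_fam {-\<epsilon><..<\<epsilon>} A"
  proof (cases "A \<subseteq> S_cc")
    case False
    then show ?thesis unfolding ss_e_perp_fam_def ss_l_perp_fam_def by simp
  next
    case True
    have 1: "\<exists>X\<in>inf_coinf. \<forall>a\<in>A. sub_sums_in a X {-\<epsilon><..<\<epsilon>}"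
      if H: "\<exists>X\<in>inf_coinf. \<forall>a\<in>A. sub_sums_in a X (eint \<epsilon> a)"
    proof -
      obtain X where X: "X \<in> inf_coinf" "\<forall>a\<in>A. sub_sums_in a X (eint \<epsilon> a)" using H by auto
      have "\<forall>a\<in>A. sub_sums_in a (UNIV - X) {-\<epsilon><..<\<epsilon>}"
        using e_to_l[OF _ X(1)] X(2) True by auto
      then show ?thesis using compl_inf_coinf[OF X(1)] by auto
    qed
    have 2: "\<exists>X\<in>inf_coinf. \<forall>a\<in>A. sub_sums_in a X (eint \<epsilon> a)"
      if H: "\<exists>X\<in>inf_coinf. \<forall>a\<in>A. sub_sums_in a X {-\<epsilon><..<\<epsilon>}"
    proof -
      obtain X where X: "X \<in> inf_coinf" "\<forall>a\<in>A. sub_sums_in a X {-\<epsilon><..<\<epsilon>}" using H by auto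
      have "\<forall>a\<in>A. sub_sums_in a (UNIV - X) (eint \<epsilon> a)"
        using l_to_e[OF _ X(1)] X(2) True by auto
      then show ?thesis using compl_inf_coinf[OF X(1)] by auto
    qed
    show ?thesis unfolding ss_e_perp_fam_def ss_l_perp_fam_def using 1 2 by blast
  qed
qed

theorem mainTheorem10:
  fixes \<epsilon> :: real
  assumes "\<epsilon> > 0"
  shows "(ss_e \<epsilon>, ss_l {-\<epsilon><..<\<epsilon>}) \<in> ordIso
       \<and> (ss_e_perp \<epsilon>, ss_l_perp {-\<epsilon><..<\<epsilon>}) \<in> ordIso"
proof
  have inj: "inj (\<lambda>X::nat set. UNIV - X)" by (auto simp: inj_def)
  show "(ss_e \<epsilon>, ss_l {-\<epsilon><..<\<epsilon>}) \<in> ordIso"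
    unfolding ss_e_def ss_l_def
    by (rule mincard_iso[of "ss_e_fam \<epsilon>" "ss_l_fam {-\<epsilon><..<\<epsilon>}" "\<lambda>X. UNIV - X", OF fam_PQ fam_QP inj])
next
  show "(ss_e_perp \<epsilon>, ss_l_perp {-\<epsilon><..<\<epsilon>}) \<in> ordIso"
    unfolding ss_e_perp_def ss_l_perp_def perp_eq
    unfolding mincard_def by (rule ordIso_refl[OF card_of_Card_order])
qed

end
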